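(* Let $\vec w=(w_1,\dots,w_n)\in[0,1]^n$ with $\sum_{i=1}^n w_i=1$. Then there is a distributive family $\Gamma=\{f_i:[0,1]^n\to[0,1]: i=1,\dots,n\}$ on $\langle [0,1], S_{LK}, T_P\rangle$ such that $DYOWA_\Gamma(\vec x)=OWA_{\vec w}(\vec x)$ for all $\vec x\in[0,1]^n$. That is, every Yager OWA function is a DYOWA function.
   Context: $T_P(x,y)=xy$ (product t-norm) and $S_{LK}(x,y)=\min(x+y,1)$ (Łukasiewicz t-conorm) on $[0,1]$; $n$-ary versions by left folding, e.g. $\bigoplus_{i=1}^n x_i=(\cdots((x_1\oplus x_2)\oplus x_3)\cdots)\oplus x_n$ with $\oplus=S_{LK}$, $\otimes=T_P$. Yager's OWA: $OWA_{\vec w}(x_1,\dots,x_n)=\sum_{i=1}^n w_i x_{(i)}$, where $(x_{(1)},\dots,x_{(n)})$ is the decreasing rearrangement of $(x_1,\dots,x_n)$. A finite family $\Gamma=\{f_i:L^n\to L\}$ is a weight function family on $\langle L,\oplus,\otimes\rangle$ if $\bigoplus_{i=1}^n f_i(\vec a)=\top_L$ for every $\vec a$; it is a distributive family if moreover $c\otimes\bigl(\bigoplus_{i=1}^n f_i(\vec a)\bigr)=\bigoplus_{i=1}^n (c\otimes f_i(\vec a))$ for all $c\in L$, $\vec a\in L^n$. The Lizasoain–Moreno function is $\mathscr{LM}(a_1,\dots,a_n)=(b_1,\dots,b_n)$ with $b_k=\bigvee_{\{j_1<\dots<j_k\}\subseteq\{1,\dots,n\}} a_{j_1}\wedge\cdots\wedge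 a_{j_k}$ (join over all $k$-element subsets). $DYOWA_\Gamma(\vec a)=\bigoplus_{i=1}^n \bigl(f_i(\vec a)\otimes b_i\bigr)$, where $(b_1,\dots,b_n)=\mathscr{LM}(\vec a)$. *)

theory Defs
  imports Complex_Main
begin

text \<open>Vectors in [0,1]^n are represented as real lists of length n; indices are 0-based
  (position i of the list corresponds to index i+1 of the paper).\<close>

definition T_P :: "real \<Rightarrow> real \<Rightarrow> real" where
  "T_P x y = x * y"

definition S_LK :: "real \<Rightarrow> real \<Rightarrow> real" where
  "S_LK x y = min (x + y) 1"

definition S_LK_fold :: "real list \<Rightarrow> real" where
  "S_LK_fold xs = (case xs of [] \<Rightarrow> 0 | y # ys \<Rightarrow> foldl S_LK y ys)"

definition in_cube :: "nat \<Rightarrow> real list \<Rightarrow> bool" where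
  "in_cube n a \<longleftrightarrow> length a = n \<and> (\<forall>x\<in>set a. 0 \<le> x \<and> x \<le> 1)"

definition weight_family :: "nat \<Rightarrow> (nat \<Rightarrow> real list \<Rightarrow> real) \<Rightarrow> bool" where
  "weight_family n f \<longleftrightarrow>
     (\<forall>a. in_cube n a \<longrightarrow>
        (\<forall>i<n. 0 \<le> f i a \<and> f i a \<le> 1) \<and>
        S_LK_fold (map (\<lambda>i. f i a) [0..<n]) = 1)"

definition distributive_family :: "nat \<Rightarrow> (nat \<Rightarrow> real list \<Rightarrow> real) \<Rightarrow> bool" where
  "distributive_family n f \<longleftrightarrow> weight_family n f \<and>
     (\<forall>c a. 0 \<le> c \<and> c \<le> 1 \<and> in_cube n a \<longrightarrow>
        T_P c (S_LK_fold (map (\<lambda>i. f i a) [0..<n])) =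
        S_LK_fold (map (\<lambda>i. T_P c (f i a)) [0..<n]))"

text \<open>Lizasoain--Moreno: k-th component (k = 1..n) is the join over all k-element
  index subsets of the meet of the corresponding entries (join = Max, meet = Min on [0,1]).\<close>
definition LM :: "real list \<Rightarrow> nat \<Rightarrow> real" where
  "LM a k = Max {Min ((\<lambda>j. a ! j) ` J) | J. J \<subseteq> {0..<length a} \<and> card J = k}"

definition DYOWA :: "nat \<Rightarrow> (nat \<Rightarrow> real list \<Rightarrow> real) \<Rightarrow> real list \<Rightarrow> real" where
  "DYOWA n f a = S_LK_fold (map (\<lambda>i. T_P (f i a) (LM a (i + 1))) [0..<n])"

definition OWA :: "real list \<Rightarrow> real list \<Rightarrow> real" where
  "OWA w a = (\<Sum>i<length a. w ! i * rev (sort a) ! i)"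

end

theory Submission
  imports Defs "HOL-Combinatorics.List_Permutation"
begin

lemma foldl_SLK:
  "\<forall>z\<in>set ys. 0 \<le> z \<Longrightarrow> y \<le> 1 \<Longrightarrow> foldl S_LK y ys = min (y + sum_list ys) 1"
proof (induction ys arbitrary: y)
  case Nil then show ?case by simp
next
  case (Cons z zs)
  have "foldl S_LK y (z # zs) = foldl S_LK (min (y + z) 1) zs" by (simp add: S_LK_def)
  also have "\<dots> = min (min (y + z) 1 + sum_list zs) 1" using Cons by simp
  also have "\<dots> = min (y + sum_list (z # zs)) 1"
    using Cons.prems sum_list_nonneg[of zs] by (auto simp: min_def)
  finally show ?case .
qed

lemma SLK_fold_eq:
  "\<forall>z\<in>set xs. 0 \<le> z \<and> z \<le> 1 \<Longrightarrow> S_LK_fold xs = min (sum_list xs) 1"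
  by (cases xs) (auto simp: S_LK_fold_def foldl_SLK)

lemma sum_list_upt_map: "sum_list (map g [0..<n]) = (\<Sum>i<n. g i)"
  by (induction n) auto

lemma dec_min_le:
  fixes s :: "real list"
  assumes "sorted (rev s)" "J \<subseteq> {..<length s}" "card J = k" "1 \<le> k"
  shows "Min ((!) s ` J) \<le> s ! (k - 1)"
proof -
  have fin: "finite J" using assms(2) finite_subset by blast
  have "\<exists>j\<in>J. k - 1 \<le> j"
  proof (rule ccontr)
    assume "\<not> ?thesis"
    then have "J \<subseteq> {..<k-1}" by auto
    then have "card J \<le> card {..<k-1}" by (rule card_mono[rotated]) simp
    then have "card J \<le> k - 1" by simp
    then show False using assms by simp
  qed
  then obtain j where j: "j \<in> J" "k - 1 \<le> j" by blast
  have "Min ((!) s ` J) \<le> s ! j" using fin j(1) by (intro Min_le) auto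
  also have "\<dots> \<le> s ! (k-1)"
  proof (rule sorted_rev_nth_mono[OF assms(1) j(2)])
    show "j < length s" using j(1) assms(2) by blast
  qed
  finally show ?thesis .
qed

lemma LM_eq:
  fixes x :: "real list"
  assumes "1 \<le> k" "k \<le> length x"
  shows "LM x k = rev (sort x) ! (k - 1)"
proof -
  define s where "s = rev (sort x)"
  define n where "n = length x"
  have ls: "length s = n" by (simp add: s_def n_def)
  have srt: "sorted (rev s)" by (simp add: s_def)
  have "x <~~> s" by (simp add: s_def)
  then obtain f where f: "bij_betw f {..<n} {..<n}" "\<forall>i<n. x ! i = s ! f i"
    using permutation_Ex_bij ls n_def by metis
  define S where "S = {Min ((\<lambda>j. x ! j) ` J) | J. J \<subseteq> {0..<length x} \<and> card J = k}"
  have imgJ: "(\<lambda>j. x ! j) ` J = (!) s ` (f ` J)" if "J \<subseteq> {..<n}" for J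
    using f(2) that by (force simp: image_iff)
  have finS: "finite S"
  proof -
    have "S \<subseteq> (\<lambda>J. Min ((\<lambda>j. x ! j) ` J)) ` Pow {0..<length x}" unfolding S_def by auto
    then show ?thesis using finite_subset by blast
  qed
  have mem: "s ! (k-1) \<in> S"
  proof -
    define J where "J = inv_into {..<n} f ` {..<k}"
    have fJ: "f ` J = {..<k}"
      unfolding J_def using f(1) assms(2) n_def
      by (subst image_inv_into_cancel[of f "{..<n}"]) (auto simp: bij_betw_def)
    have Jsub: "J \<subseteq> {..<n}"
    proof
      fix j assume "j \<in> J"
      then obtain i where i: "i < k" "j = inv_into {..<n} f i" unfolding J_def by auto
      have "i \<in> f ` {..<n}" using f(1) i assms(2) n_def by (auto simp: bij_betw_def)
      then show "j \<in> {..<n}" using i inv_into_into by metis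
    qed
    have injJ: "inj_on f J" using f(1) Jsub by (auto simp: bij_betw_def intro: inj_on_subset)
    have cJ: "card J = k" using card_image[OF injJ] fJ by simp
    have "Min ((\<lambda>j. x ! j) ` J) = Min ((!) s ` {..<k})" using imgJ[OF Jsub] fJ by simp
    also have "\<dots> = s ! (k-1)"
    proof (rule Min_eqI)
      show "finite ((!) s ` {..<k})" by simp
      show "s ! (k - 1) \<in> (!) s ` {..<k}" using assms by auto
      fix y assume "y \<in> (!) s ` {..<k}"
      then obtain i where "i < k" "y = s ! i" by auto
      then show "s ! (k-1) \<le> y" using sorted_rev_nth_mono[OF srt, of i "k-1"] assms ls n_def by auto
    qed
    finally show ?thesis unfolding S_def using Jsub cJ n_def by (auto intro!: exI[of _ J])
  qed
  have ub: "v \<le> s ! (k-1)" if vS: "v \<in> S" for v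
  proof -
    obtain J where J0: "v = Min ((\<lambda>j. x ! j) ` J)" "J \<subseteq> {0..<length x}" "card J = k"
      using vS unfolding S_def by blast
    then have J: "v = Min ((\<lambda>j. x ! j) ` J)" "J \<subseteq> {..<n}" "card J = k"
      by (auto simp: n_def)
    have injJ: "inj_on f J" using f(1) J(2) by (auto simp: bij_betw_def intro: inj_on_subset)
    have "f ` J \<subseteq> {..<length s}" using f(1) J(2) ls by (auto simp: bij_betw_def)
    moreover have "card (f ` J) = k" using card_image[OF injJ] J by simp
    ultimately have "Min ((!) s ` (f ` J)) \<le> s ! (k-1)" using dec_min_le[OF srt] assms by blast
    then show ?thesis using J imgJ by simp
  qed
  have "LM x k = Max S" unfolding LM_def S_def by simp
  also have "\<dots> = s ! (k-1)" using Max_eqI[OF finS ub mem] by simp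
  finally show ?thesis by (simp add: s_def)
qed

theorem corollary1:
  fixes w :: "real list" and n :: nat
  assumes "length w = n"
    and "\<forall>x\<in>set w. 0 \<le> x \<and> x \<le> 1"
    and "sum_list w = 1"
  shows "\<exists>f. distributive_family n f \<and> (\<forall>x. in_cube n x \<longrightarrow> DYOWA n f x = OWA w x)"
proof -
  define f :: "nat \<Rightarrow> real list \<Rightarrow> real" where "f = (\<lambda>i a. w ! i)"
  have wi: "0 \<le> w ! i \<and> w ! i \<le> 1" if "i < n" for i using assms(1,2) that by auto
  have mapw: "map (\<lambda>i. f i a) [0..<n] = w" for a
    unfolding f_def using assms(1) map_nth[of w] by simp
  have sumw: "(\<Sum>i<n. w ! i) = 1" using assms(1,3) by (simp add: sum_list_sum_nth atLeast0LessThan)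
  have fold1: "S_LK_fold w = 1" using SLK_fold_eq[of w] assms(2,3) by simp
  have wf: "weight_family n f"
    unfolding weight_family_def mapw using wi fold1 by (simp add: f_def)
  have df: "distributive_family n f"
    unfolding distributive_family_def
  proof (intro conjI allI impI wf)
    fix c :: real and a assume ca: "0 \<le> c \<and> c \<le> 1 \<and> in_cube n a"
    have e1: "T_P c (S_LK_fold (map (\<lambda>i. f i a) [0..<n])) = c"
      unfolding mapw fold1 by (simp add: T_P_def)
    have el: "\<forall>z\<in>set (map (\<lambda>i. T_P c (f i a)) [0..<n]). 0 \<le> z \<and> z \<le> 1"
      using wi ca by (auto simp: T_P_def f_def mult_le_one)
    have "S_LK_fold (map (\<lambda>i. T_P c (f i a)) [0..<n]) = min (\<Sum>i<n. T_P c (f i a)) 1"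
      using SLK_fold_eq[OF el] by (simp only: sum_list_upt_map)
    also have "(\<Sum>i<n. T_P c (f i a)) = c" using sumw
      by (simp add: T_P_def f_def sum_distrib_left[symmetric])
    finally show "T_P c (S_LK_fold (map (\<lambda>i. f i a) [0..<n])) =
        S_LK_fold (map (\<lambda>i. T_P c (f i a)) [0..<n])" using ca e1 by simp
  qed
  have ow: "DYOWA n f x = OWA w x" if x: "in_cube n x" for x
  proof -
    have lx: "length x = n" using x by (simp add: in_cube_def)
    define s where "s = rev (sort x)"
    have si: "0 \<le> s ! i \<and> s ! i \<le> 1" if "i < n" for i
    proof -
      have "s ! i \<in> set x" using that lx unfolding s_def
        by (metis length_rev length_sort nth_mem set_rev set_sort)
      then show ?thesis using x by (auto simp: in_cube_def)
    qed
    have LMi: "LM x (i + 1) = s ! i" if "i < n" for i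
      using LM_eq[of "i+1" x] that lx by (simp add: s_def)
    have el: "\<forall>z\<in>set (map (\<lambda>i. T_P (f i x) (LM x (i + 1))) [0..<n]). 0 \<le> z \<and> z \<le> 1"
      using wi si LMi by (auto simp: T_P_def f_def mult_le_one)
    have "DYOWA n f x = min (\<Sum>i<n. T_P (f i x) (LM x (i + 1))) 1"
      unfolding DYOWA_def using SLK_fold_eq[OF el] by (simp only: sum_list_upt_map)
    also have "(\<Sum>i<n. T_P (f i x) (LM x (i + 1))) = (\<Sum>i<n. w ! i * s ! i)"
      using LMi by (auto simp: T_P_def f_def intro!: sum.cong)
    also have "min (\<Sum>i<n. w ! i * s ! i) 1 = (\<Sum>i<n. w ! i * s ! i)"
    proof -
      have "(\<Sum>i<n. w ! i * s ! i) \<le> (\<Sum>i<n. w ! i)"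
        by (rule sum_mono) (use wi si in \<open>auto intro: mult_left_le\<close>)
      then show ?thesis using sumw by simp
    qed
    finally show ?thesis unfolding OWA_def s_def lx .
  qed
  show ?thesis using df ow by blast
qed

end
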